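(* Let $\Gamma$ be an infinite connected subgraph of $\mathbb B$ with natural weights. There is a constant $c_1>0$ such that the following holds. Let $r\ge1$, $x_0\in\Gamma$, $B=B(x_0,r)$, $M=M(x_0,r)$, $V=V(x_0,r)$ and $V_1=V(x_0,r/(32M))$. Then for $x\in B(x_0,r/(32M))$ and $t>0$, $$P^x(\tau_B\le t)\le\Big(1-\frac{V_1}{64MV}\Big)+\frac{t}{2rV},$$ and $$q_{2t}(x,x)\ge\frac{c_1V_1^2}{V^3M^2}\quad\text{for } t\le\frac{rV_1}{64M}.$$
   Context: $\mathbb B$ is the rooted tree in which every vertex has $n_0\ge2$ children. On $\Gamma$: $\mu_{xy}=1$ for adjacent $x,y$ and $0$ otherwise, $\mu_x$ the degree of $x$ in $\Gamma$, $\mu(A)=\sum_{x\in A}\mu_x$, $d$ the graph distance in $\Gamma$, $B(x,r)=\{y\in\Gamma:d(x,y)\le r\}$, $V(x,r)=\mu(B(x,r))$. $Y$ is the continuous-time simple random walk on $\Gamma$ (exponential mean-1 holding times, jumps to a uniform neighbour) with law $P^x$, $q_t(x,y)=P^x(Y_t=y)/\mu_y$, and $\tau_B=\inf\{t\ge0:Y_t\notin B\}$. $M(x,r)$ is the smallest $m$ such that there is $A=\{z_1,\dots,z_m\}\subset\Gamma$ with $d(x,z_i)\in[r/4,3r/4]$ for all $i$ such that every path in $\Gamma$ from $x$ to $\Gamma\setminus B(x,r)$ passes through $A$. *)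

theory Defs
  imports Complex_Main
begin

text \<open>The rooted tree in which every vertex has n0 children: vertices are words
  over the alphabet {0..<n0}; the root is the empty word, the children of w are w @ [i].\<close>

definition tree_vert :: "nat \<Rightarrow> nat list set" where
  "tree_vert n0 = {w. \<forall>i\<in>set w. i < n0}"

definition tree_adj :: "nat \<Rightarrow> nat list \<Rightarrow> nat list \<Rightarrow> bool" where
  "tree_adj n0 u v \<longleftrightarrow> u \<in> tree_vert n0 \<and> v \<in> tree_vert n0 \<and>
     ((\<exists>i<n0. v = u @ [i]) \<or> (\<exists>i<n0. u = v @ [i]))"

definition adj :: "nat \<Rightarrow> nat list set \<Rightarrow> nat list \<Rightarrow> nat list \<Rightarrow> bool" where
  "adj n0 S u v \<longleftrightarrow> u \<in> S \<and> v \<in> S \<and> tree_adj n0 u v"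

definition nbrs :: "nat \<Rightarrow> nat list set \<Rightarrow> nat list \<Rightarrow> nat list set" where
  "nbrs n0 S x = {y. adj n0 S x y}"

definition deg :: "nat \<Rightarrow> nat list set \<Rightarrow> nat list \<Rightarrow> nat" where
  "deg n0 S x = card (nbrs n0 S x)"

definition mu :: "nat \<Rightarrow> nat list set \<Rightarrow> nat list set \<Rightarrow> real" where
  "mu n0 S A = (\<Sum>x\<in>A. real (deg n0 S x))"

definition is_walk :: "nat \<Rightarrow> nat list set \<Rightarrow> nat list list \<Rightarrow> bool" where
  "is_walk n0 S p \<longleftrightarrow> p \<noteq> [] \<and> set p \<subseteq> S \<and>
     (\<forall>i. Suc i < length p \<longrightarrow> adj n0 S (p ! i) (p ! Suc i))"

definition graph_connected :: "nat \<Rightarrow> nat list set \<Rightarrow> bool" where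
  "graph_connected n0 S \<longleftrightarrow>
     (\<forall>x\<in>S. \<forall>y\<in>S. \<exists>p. is_walk n0 S p \<and> hd p = x \<and> last p = y)"

definition gdist :: "nat \<Rightarrow> nat list set \<Rightarrow> nat list \<Rightarrow> nat list \<Rightarrow> nat" where
  "gdist n0 S x y = (LEAST n. \<exists>p. is_walk n0 S p \<and> hd p = x \<and> last p = y \<and> length p = Suc n)"

definition gball :: "nat \<Rightarrow> nat list set \<Rightarrow> nat list \<Rightarrow> real \<Rightarrow> nat list set" where
  "gball n0 S x r = {y\<in>S. real (gdist n0 S x y) \<le> r}"

definition vol :: "nat \<Rightarrow> nat list set \<Rightarrow> nat list \<Rightarrow> real \<Rightarrow> real" where
  "vol n0 S x r = mu n0 S (gball n0 S x r)"

definition Mprop :: "nat \<Rightarrow> nat list set \<Rightarrow> nat list \<Rightarrow> real \<Rightarrow> nat \<Rightarrow> bool" where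
  "Mprop n0 S x r m \<longleftrightarrow> (\<exists>A. finite A \<and> card A = m \<and> A \<subseteq> S \<and>
     (\<forall>z\<in>A. r / 4 \<le> real (gdist n0 S x z) \<and> real (gdist n0 S x z) \<le> 3 * r / 4) \<and>
     (\<forall>p. is_walk n0 S p \<and> hd p = x \<and> last p \<notin> gball n0 S x r \<longrightarrow> set p \<inter> A \<noteq> {}))"

definition Mnum :: "nat \<Rightarrow> nat list set \<Rightarrow> nat list \<Rightarrow> real \<Rightarrow> nat" where
  "Mnum n0 S x r = (LEAST m. Mprop n0 S x r m)"

fun pk :: "nat \<Rightarrow> nat list set \<Rightarrow> nat \<Rightarrow> nat list \<Rightarrow> nat list \<Rightarrow> real" where
  "pk n0 S 0 x y = (if x = y then 1 else 0)"
| "pk n0 S (Suc k) x y = (\<Sum>z\<in>nbrs n0 S x. pk n0 S k z y) / real (deg n0 S x)"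

fun exitk :: "nat \<Rightarrow> nat list set \<Rightarrow> nat list set \<Rightarrow> nat \<Rightarrow> nat list \<Rightarrow> real" where
  "exitk n0 S Bs 0 x = (if x \<notin> Bs then 1 else 0)"
| "exitk n0 S Bs (Suc k) x = (if x \<notin> Bs then 1 else
       (\<Sum>z\<in>nbrs n0 S x. exitk n0 S Bs k z) / real (deg n0 S x))"

text \<open>Continuous-time SRW with Exp(1) holding times: Y_t = X_(N_t), N_t ~ Poisson(t)
  independent of the jump chain X.  P^x(Y_t = y):\<close>
definition ctrw_prob :: "nat \<Rightarrow> nat list set \<Rightarrow> real \<Rightarrow> nat list \<Rightarrow> nat list \<Rightarrow> real" where
  "ctrw_prob n0 S t x y = (\<Sum>k. exp (- t) * t ^ k / fact k * pk n0 S k x y)"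

definition heat_kernel :: "nat \<Rightarrow> nat list set \<Rightarrow> real \<Rightarrow> nat list \<Rightarrow> nat list \<Rightarrow> real" where
  "heat_kernel n0 S t x y = ctrw_prob n0 S t x y / real (deg n0 S y)"

text \<open>P^x(tau_Bs \<le> t): the walk has left Bs by time t iff the jump chain leaves Bs
  within the first N_t jumps.\<close>
definition exit_prob :: "nat \<Rightarrow> nat list set \<Rightarrow> nat list set \<Rightarrow> real \<Rightarrow> nat list \<Rightarrow> real" where
  "exit_prob n0 S Bs t x = (\<Sum>k. exp (- t) * t ^ k / fact k * exitk n0 S Bs k x)"

end

theory Submission
  imports Defs "HOL-Library.Sublist"
begin

locale TG =
  fixes n0 :: nat and S :: "nat list set"
  assumes n0: "n0 \<ge> 2" and Ssub: "S \<subseteq> tree_vert n0" and Sinf: "infinite S"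
    and conn: "graph_connected n0 S"
begin

abbreviation "ad u v \<equiv> adj n0 S u v"
abbreviation "W p \<equiv> is_walk n0 S p"
abbreviation "d x y \<equiv> gdist n0 S x y"
abbreviation "N x \<equiv> nbrs n0 S x"
abbreviation "dg x \<equiv> deg n0 S x"

lemma adj_sym: "ad u v \<Longrightarrow> ad v u"
  unfolding adj_def tree_adj_def by blast

lemma adj_S: "ad u v \<Longrightarrow> u \<in> S \<and> v \<in> S"
  unfolding adj_def by blast

lemma adj_cases: "ad u v \<Longrightarrow> (\<exists>i. v = u @ [i]) \<or> (\<exists>i. u = v @ [i])"
  unfolding adj_def tree_adj_def by blast

lemma adj_len: "ad u v \<Longrightarrow> length v = Suc (length u) \<or> length u = Suc (length v)"
  using adj_cases by fastforce

lemma adj_neq: "ad u v \<Longrightarrow> u \<noteq> v"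
  using adj_len by fastforce

lemma nbrs_finite: "finite (N x)"
proof -
  have "N x \<subseteq> {butlast x} \<union> (\<lambda>i. x @ [i]) ` {..<n0}"
    unfolding nbrs_def adj_def tree_adj_def by auto
  then show ?thesis by (rule finite_subset) auto
qed

lemma walk_single: "x \<in> S \<Longrightarrow> W [x]"
  unfolding is_walk_def by auto

lemma walk_nth_adj: "W p \<Longrightarrow> Suc i < length p \<Longrightarrow> ad (p!i) (p!Suc i)"
  unfolding is_walk_def by blast

lemma walk_ne: "W p \<Longrightarrow> p \<noteq> []"
  unfolding is_walk_def by blast

lemma walk_set: "W p \<Longrightarrow> set p \<subseteq> S"
  unfolding is_walk_def by blast

lemma walk_snoc: assumes "W p" "ad (last p) y" shows "W (p @ [y])"
proof -
  have ne: "p \<noteq> []" using assms walk_ne by blast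
  have "set (p @ [y]) \<subseteq> S" using assms walk_set adj_S by auto
  moreover have "ad ((p@[y])!i) ((p@[y])!Suc i)" if "Suc i < length (p@[y])" for i
  proof (cases "Suc i < length p")
    case True then show ?thesis using assms(1) walk_nth_adj by (simp add: nth_append)
  next
    case False
    then have "i = length p - 1" using that by simp
    then show ?thesis using assms(2) ne by (simp add: nth_append last_conv_nth)
  qed
  ultimately show ?thesis unfolding is_walk_def by simp
qed

lemma walk_rev: assumes "W p" shows "W (rev p)"
proof -
  have "ad ((rev p)!i) ((rev p)!Suc i)" if "Suc i < length (rev p)" for i
  proof -
    have "ad (p!(length p - Suc (Suc i))) (p!Suc (length p - Suc (Suc i)))"
      using assms walk_nth_adj that by simp
    moreover have "Suc (length p - Suc (Suc i)) = length p - Suc i" using that by simp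
    ultimately show ?thesis using that by (simp add: rev_nth adj_sym)
  qed
  then show ?thesis using assms unfolding is_walk_def by auto
qed

lemma walk_take: assumes "W p" "0 < k" shows "W (take k p)"
  using assms unfolding is_walk_def
  by (auto dest: in_set_takeD)

lemma walk_drop: assumes "W p" "k < length p" shows "W (drop k p)"
  using assms unfolding is_walk_def
  by (auto dest: in_set_dropD)

lemma hd_append_tl: "p \<noteq> [] \<Longrightarrow> hd (p @ tl q) = hd p" by simp
lemma last_append_tl: "p \<noteq> [] \<Longrightarrow> q \<noteq> [] \<Longrightarrow> last p = hd q \<Longrightarrow> last (p @ tl q) = last q"
  by (cases q) auto

lemma walk_append: assumes "W p" "W q" "last p = hd q" shows "W (p @ tl q)"
  using assms(2,3)
proof (induction q rule: rev_induct)
  case Nil then show ?case using walk_ne by blast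
next
  case (snoc y q)
  show ?case
  proof (cases "q = []")
    case True then show ?thesis using snoc assms(1) by simp
  next
    case False
    have Wq: "W q" using walk_take[OF snoc.prems(1), of "length q"] False by simp
    have "W (p @ tl q)" using snoc.IH[OF Wq] snoc.prems False by simp
    moreover have "ad (last q) y"
      using walk_nth_adj[OF snoc.prems(1), of "length q - 1"] False
      by (simp add: nth_append last_conv_nth)
    moreover have "last (p @ tl q) = last q"
      using last_append_tl[of p q] walk_ne[OF assms(1)] False snoc.prems by simp
    ultimately have "W (p @ tl q @ [y])"
      using walk_snoc[of "p @ tl q" y] by simp
    then show ?thesis using False by simp
  qed
qed

lemma dist_ex: assumes "x \<in> S" "y \<in> S"
  shows "\<exists>p. W p \<and> hd p = x \<and> last p = y \<and> length p = Suc (d x y)"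
proof -
  obtain p where p: "W p" "hd p = x" "last p = y" using conn assms unfolding graph_connected_def by blast
  then have "\<exists>n p. W p \<and> hd p = x \<and> last p = y \<and> length p = Suc n"
    using walk_ne by (metis Suc_pred length_greater_0_conv)
  then show ?thesis unfolding gdist_def by (rule LeastI_ex)
qed

lemma dist_le: assumes "W p" "hd p = x" "last p = y" shows "d x y \<le> length p - 1"
proof -
  have "length p = Suc (length p - 1)" using walk_ne[OF assms(1)] by simp
  then show ?thesis unfolding gdist_def using assms by (intro Least_le) blast
qed

lemma dist_self: "x \<in> S \<Longrightarrow> d x x = 0"
  using dist_le[OF walk_single] by fastforce

lemma dist_sym: assumes "x \<in> S" "y \<in> S" shows "d x y = d y x"
proof -
  have "d y x \<le> d x y" if xy: "x \<in> S" "y \<in> S" for x y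
  proof -
    obtain p where p: "W p" "hd p = x" "last p = y" "length p = Suc (d x y)" using dist_ex xy by blast
    have "d y x \<le> length (rev p) - 1"
      using dist_le[OF walk_rev[OF p(1)]] p walk_ne[OF p(1)] by (simp add: hd_rev last_rev)
    then show ?thesis using p by simp
  qed
  then show ?thesis using assms by (meson antisym)
qed

lemma dist_tri: assumes "x \<in> S" "y \<in> S" "z \<in> S" shows "d x z \<le> d x y + d y z"
proof -
  obtain p where p: "W p" "hd p = x" "last p = y" "length p = Suc (d x y)" using dist_ex assms by blast
  obtain q where q: "W q" "hd q = y" "last q = z" "length q = Suc (d y z)" using dist_ex assms by blast
  have "W (p @ tl q)" using walk_append p q by simp
  moreover have "hd (p @ tl q) = x" "last (p @ tl q) = z"
    using p q walk_ne[OF p(1)] walk_ne[OF q(1)] last_append_tl[of p q] by auto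
  ultimately have "d x z \<le> length (p @ tl q) - 1" using dist_le by blast
  then show ?thesis using p q by simp
qed

lemma dist_adj1: assumes "ad u v" shows "d u v \<le> 1"
proof -
  have "W [u, v]" using assms adj_S unfolding is_walk_def
    by (auto simp: less_Suc_eq nth_Cons split: nat.splits)
  then show ?thesis using dist_le[of "[u,v]"] by simp
qed

lemma dist_adj: assumes "ad y w" "x \<in> S" shows "d x w \<le> d x y + 1"
  using dist_tri[of x y w] dist_adj1[OF assms(1)] adj_S[OF assms(1)] assms(2) by simp

lemma dist_index: assumes "W p" "hd p = x" "last p = y" "i < length p"
  shows "d x (p!i) \<le> i" "d (p!i) y \<le> length p - 1 - i"
proof -
  have "W (take (Suc i) p)" using walk_take assms by blast
  moreover have "hd (take (Suc i) p) = x" using assms walk_ne[OF assms(1)] by (simp add: hd_conv_nth)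
  moreover have "last (take (Suc i) p) = p!i" using assms by (subst last_conv_nth) (auto simp: min_def intro: arg_cong[where f="(!) p"])
  ultimately have "d x (p!i) \<le> length (take (Suc i) p) - 1" using dist_le[of "take (Suc i) p"] by blast
  then show "d x (p!i) \<le> i" using assms by simp
  have "W (drop i p)" using walk_drop assms by blast
  moreover have "hd (drop i p) = p!i" using assms by (simp add: hd_drop_conv_nth)
  moreover have "last (drop i p) = y" using assms by simp
  ultimately show "d (p!i) y \<le> length p - 1 - i" using dist_le[of "drop i p"] by simp
qed

lemma walk_parity: assumes "W p" shows "i < length p \<Longrightarrow> even (i + length (p!0) + length (p!i))"
proof (induction i)
  case 0 then show ?case by simp
next
  case (Suc i)
  then have "ad (p!i) (p!Suc i)" using walk_nth_adj assms by simp
  then show ?case using Suc adj_len by fastforce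
qed

lemma dist_parity: assumes "x \<in> S" "y \<in> S" shows "even (d x y + length x + length y)"
proof -
  obtain p where p: "W p" "hd p = x" "last p = y" "length p = Suc (d x y)" using dist_ex assms by blast
  have "even (d x y + length (p!0) + length (p!d x y))" using walk_parity[OF p(1)] p by simp
  moreover have "p!0 = x" using p walk_ne[OF p(1)] by (simp add: hd_conv_nth)
  moreover have "p!d x y = y" using p walk_ne[OF p(1)] by (simp add: last_conv_nth)
  ultimately show ?thesis by simp
qed

lemma adj_dist: assumes "ad y w" "p \<in> S"
  shows "d p w = d p y + 1 \<or> d p y = d p w + 1"
proof -
  have yw: "y \<in> S" "w \<in> S" using adj_S assms by auto
  have "d p w \<le> d p y + 1" using dist_adj assms by blast
  moreover have "d p y \<le> d p w + 1" using dist_adj adj_sym assms by blast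
  moreover have "even (d p w + length p + length w)" "even (d p y + length p + length y)"
    using dist_parity yw assms by auto
  moreover have "length w = Suc (length y) \<or> length y = Suc (length w)" using adj_len assms by blast
  ultimately show ?thesis by auto presburger+
qed

end

context TG
begin

lemma prefix_exit:
  assumes "W q" "c \<noteq> []" "prefix c (hd q)" "\<not> prefix c (last q)"
  shows "\<exists>i. Suc i < length q \<and> q!i = c \<and> q!Suc i = butlast c"
proof -
  have ne: "q \<noteq> []" using walk_ne assms by blast
  define P where "P j \<longleftrightarrow> j < length q \<and> \<not> prefix c (q!j)" for j
  have ex: "P (length q - 1)" using assms ne unfolding P_def by (simp add: last_conv_nth)
  define j where "j = (LEAST j. P j)"
  have Pj: "P j" unfolding j_def using ex by (rule LeastI)
  have j0: "j \<noteq> 0"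
  proof
    assume "j = 0"
    then show False using Pj assms(3) ne unfolding P_def by (simp add: hd_conv_nth)
  qed
  then obtain i where ji: "j = Suc i" by (cases j) auto
  have "\<not> P i" using not_less_Least[of i P] ji unfolding j_def by simp
  then have pi: "prefix c (q!i)" using Pj ji unfolding P_def by simp
  have a: "ad (q!i) (q!Suc i)" using walk_nth_adj assms(1) Pj ji unfolding P_def by simp
  have npj: "\<not> prefix c (q!Suc i)" using Pj ji unfolding P_def by simp
  show ?thesis
  proof (cases "\<exists>k. q!Suc i = q!i @ [k]")
    case True
    then have "prefix c (q!Suc i)" using pi by (metis prefix_append prefix_order.order_trans)
    then show ?thesis using npj by blast
  next
    case False
    then obtain k where k: "q!i = q!Suc i @ [k]" using adj_cases[OF a] by blast
    then have "c = q!Suc i @ [k]" using pi npj by (simp add: prefix_snoc)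
    then show ?thesis using k Pj ji unfolding P_def by auto
  qed
qed

lemma dist_zero: "x \<in> S \<Longrightarrow> y \<in> S \<Longrightarrow> d x y = 0 \<Longrightarrow> x = y"
  using dist_ex by (metis One_nat_def hd_conv_nth last_conv_nth length_0_conv
      nat.simps(3) diff_Suc_1)

lemma closer_ex: assumes "p \<in> S" "y \<in> S" "y \<noteq> p"
  shows "\<exists>w\<in>N y. d p w + 1 = d p y"
proof -
  obtain q where q: "W q" "hd q = p" "last q = y" "length q = Suc (d p y)" using dist_ex assms by blast
  have k0: "d p y \<noteq> 0" using dist_zero assms by blast
  then obtain k where k: "d p y = Suc k" by (cases "d p y") auto
  have a: "ad (q!k) (q!Suc k)" using walk_nth_adj q k by simp
  have "last q = q!(length q - 1)" using walk_ne[OF q(1)] by (rule last_conv_nth)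
  then have qy: "q!Suc k = y" using q k by simp
  have "d p (q!k) \<le> k" using dist_index(1)[OF q(1-3), of k] q k by simp
  moreover have "d p (q!k) = d p y + 1 \<or> d p y = d p (q!k) + 1"
    using adj_dist[OF adj_sym[OF a] assms(1)] qy by simp
  ultimately have "d p (q!k) + 1 = d p y" using k by auto
  moreover have "q!k \<in> N y" using a qy adj_sym unfolding nbrs_def by auto
  ultimately show ?thesis by blast
qed

lemma child_prefix: assumes "p \<in> S" "ad y (y @ [i])" "d p (y @ [i]) + 1 = d p y"
  shows "prefix (y @ [i]) p"
proof (rule ccontr)
  assume np: "\<not> prefix (y @ [i]) p"
  let ?w = "y @ [i]"
  have wS: "?w \<in> S" "y \<in> S" using adj_S assms by auto
  obtain q where q: "W q" "hd q = ?w" "last q = p" "length q = Suc (d ?w p)" using dist_ex wS assms by blast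
  obtain j where j: "Suc j < length q" "q!j = ?w" "q!Suc j = y"
    using prefix_exit[OF q(1), of ?w] q np by auto
  have "d y p \<le> length q - 1 - Suc j" using dist_index(2)[OF q(1-3), of "Suc j"] j by simp
  then have "d y p < d ?w p" using q j by simp
  then show False using dist_sym assms wS by simp
qed

lemma closer_unique: assumes "p \<in> S" "y \<in> S" "w1 \<in> N y" "w2 \<in> N y"
  "d p w1 + 1 = d p y" "d p w2 + 1 = d p y"
  shows "w1 = w2"
proof -
  have a1: "ad y w1" and a2: "ad y w2" using assms unfolding nbrs_def by auto
  have par: False if hp: "ad y (y@[i])" "d p (y@[i]) + 1 = d p y" "y = w @ [j]" "ad y w" "d p w + 1 = d p y" for i j w
  proof -
    have "prefix (y@[i]) p" using child_prefix hp assms(1) by blast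
    then have py: "prefix y p" using prefix_order.order_trans prefix_append by blast
    have wS: "w \<in> S" using adj_S hp by blast
    obtain q where q: "W q" "hd q = p" "last q = w" "length q = Suc (d p w)" using dist_ex wS assms by blast
    have "\<not> prefix y w" using hp(3) by (metis prefix_length_le length_append_singleton
          lessI not_less)
    then obtain k where k: "Suc k < length q" "q!k = y"
      using prefix_exit[OF q(1), of y] q py hp(3) by auto
    have "d p y \<le> k" using dist_index(1)[OF q(1-3), of k] k by simp
    then show False using k q hp(5) by simp
  qed
  show ?thesis
  proof (cases "\<exists>i. w1 = y @ [i]")
    case True
    then obtain i where i: "w1 = y @ [i]" by blast
    show ?thesis
    proof (cases "\<exists>j. w2 = y @ [j]")
      case True
      then obtain j where j: "w2 = y @ [j]" by blast
      have "prefix w1 p" "prefix w2 p" using child_prefix assms a1 a2 i j by auto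
      then show ?thesis using i j prefix_same_cases by fastforce
    next
      case False
      then obtain j where "y = w2 @ [j]" using adj_cases[OF a2] by blast
      then show ?thesis using par[of i w2 j] a1 a2 i assms by blast
    qed
  next
    case False
    then obtain i where i: "y = w1 @ [i]" using adj_cases[OF a1] by blast
    show ?thesis
    proof (cases "\<exists>j. w2 = y @ [j]")
      case True
      then obtain j where j: "w2 = y @ [j]" by blast
      then show ?thesis using par[of j w1 i] a1 a2 i assms by blast
    next
      case False
      then obtain j where "y = w2 @ [j]" using adj_cases[OF a2] by blast
      then show ?thesis using i by simp
    qed
  qed
qed

definition Lap :: "(nat list \<Rightarrow> real) \<Rightarrow> nat list \<Rightarrow> real" where
  "Lap f y = (\<Sum>w\<in>N y. f y - f w)"

lemma deg_eq: "dg y = card (N y)" unfolding deg_def by simp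

lemma LapD: assumes "p \<in> S" "y \<in> S"
  shows "Lap (\<lambda>v. real (d p v)) y = (if y = p then - real (dg y) else 2 - real (dg y))"
proof (cases "y = p")
  case True
  have "\<forall>w\<in>N y. d p w = 1"
  proof
    fix w assume "w \<in> N y"
    then have "ad y w" unfolding nbrs_def by simp
    then show "d p w = 1" using adj_dist[of y w p] dist_self True assms by auto
  qed
  then have "Lap (\<lambda>v. real (d p v)) y = (\<Sum>w\<in>N y. -1)"
    unfolding Lap_def using dist_self True assms by (intro sum.cong) auto
  then show ?thesis using True by (simp add: deg_eq)
next
  case False
  obtain w0 where w0: "w0 \<in> N y" "d p w0 + 1 = d p y" using closer_ex assms False by blast
  have rest: "d p w = d p y + 1" if "w \<in> N y - {w0}" for w
  proof -
    have "ad y w" using that unfolding nbrs_def by simp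
    then have "d p w = d p y + 1 \<or> d p y = d p w + 1" using adj_dist assms by blast
    moreover have "\<not> d p w + 1 = d p y" using closer_unique[of p y w0 w] w0 that assms by auto
    ultimately show ?thesis by auto
  qed
  have fin: "finite (N y)" by (rule nbrs_finite)
  have c1: "card (N y) \<ge> 1" using fin w0 by (metis One_nat_def Suc_leI card_gt_0_iff empty_iff)
  have "Lap (\<lambda>v. real (d p v)) y = (real (d p y) - real (d p w0)) + (\<Sum>w\<in>N y - {w0}. real (d p y) - real (d p w))"
    unfolding Lap_def using fin w0 by (simp add: sum.remove)
  also have "\<dots> = 1 + (\<Sum>w\<in>N y - {w0}. -1)"
    using w0 rest by (simp add: algebra_simps)
  also have "\<dots> = 1 - (real (dg y) - 1)"
    using fin w0 c1 by (simp add: deg_eq card_Diff_singleton_if card_gt_0_iff of_nat_diff)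
  finally show ?thesis using False by simp
qed

end

context TG
begin

lemma Lap_add: "Lap (\<lambda>v. f v + g v) y = Lap f y + Lap g y"
  unfolding Lap_def sum.distrib[symmetric] by (rule sum.cong) auto
lemma Lap_diff: "Lap (\<lambda>v. f v - g v) y = Lap f y - Lap g y"
  unfolding Lap_def sum_subtractf[symmetric] by (rule sum.cong) auto
lemma Lap_cmult: "Lap (\<lambda>v. c * f v) y = c * Lap f y"
  unfolding Lap_def by (simp add: sum_distrib_left algebra_simps)
lemma Lap_const: "Lap (\<lambda>v. c) y = 0"
  unfolding Lap_def by simp
lemma Lap_sum: "Lap (\<lambda>v. \<Sum>z\<in>Z. f z v) y = (\<Sum>z\<in>Z. Lap (f z) y)"
  unfolding Lap_def by (simp add: sum_subtractf[symmetric] sum.swap[of _ "N y"])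

definition Gr :: "nat list \<Rightarrow> nat list \<Rightarrow> nat list \<Rightarrow> real" where
  "Gr p q y = real (d p y) + real (d p q) - real (d q y)"

lemma LapGr: assumes "p \<in> S" "q \<in> S" "y \<in> S"
  shows "Lap (Gr p q) y = (if y = q then 2 else 0) - (if y = p then 2 else 0)"
proof -
  have "Lap (Gr p q) y = Lap (\<lambda>v. real (d p v)) y + Lap (\<lambda>v. real (d p q)) y - Lap (\<lambda>v. real (d q v)) y"
    unfolding Gr_def by (simp add: Lap_add Lap_diff)
  then show ?thesis using LapD[OF assms(1,3)] LapD[OF assms(2,3)] by (simp add: Lap_const)
qed

lemma Gr_nonneg: "p \<in> S \<Longrightarrow> q \<in> S \<Longrightarrow> y \<in> S \<Longrightarrow> Gr p q y \<ge> 0"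
  unfolding Gr_def using dist_tri[of q p y] dist_sym[of q p] by simp

lemma Gr_le: "p \<in> S \<Longrightarrow> q \<in> S \<Longrightarrow> y \<in> S \<Longrightarrow> Gr p q y \<le> 2 * real (d p q)"
  unfolding Gr_def using dist_tri[of p q y] by simp

lemma Gr_le': "p \<in> S \<Longrightarrow> q \<in> S \<Longrightarrow> y \<in> S \<Longrightarrow> Gr p q y \<le> 2 * real (d p y)"
  unfolding Gr_def using dist_tri[of p y q] dist_sym[of q y] by simp

lemma deg_pos: assumes "x \<in> S" shows "dg x > 0"
proof -
  obtain y where y: "y \<in> S" "y \<noteq> x" using Sinf assms
    by (metis finite.simps insertCI subsetI finite_subset)
  obtain w where "w \<in> N x" using closer_ex[of y x] y assms by blast
  then show ?thesis unfolding deg_def using nbrs_finite card_gt_0_iff by blast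
qed

lemma nbrs_S: "w \<in> N x \<Longrightarrow> w \<in> S \<and> x \<in> S"
  unfolding nbrs_def using adj_S by blast

lemma walk_len_bound: assumes "W p" shows "i < length p \<Longrightarrow> length (p!i) \<le> length (p!0) + i"
proof (induction i)
  case 0 then show ?case by simp
next
  case (Suc i)
  then have "ad (p!i) (p!Suc i)" using walk_nth_adj assms by simp
  then show ?case using Suc adj_len by fastforce
qed

lemma len_dist: assumes "x \<in> S" "y \<in> S" shows "length y \<le> length x + d x y"
proof -
  obtain p where p: "W p" "hd p = x" "last p = y" "length p = Suc (d x y)" using dist_ex assms by blast
  have "length (p!d x y) \<le> length (p!0) + d x y" using walk_len_bound[OF p(1)] p by simp
  moreover have "p!0 = x" using p walk_ne[OF p(1)] by (simp add: hd_conv_nth)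
  moreover have "p!d x y = y" using p walk_ne[OF p(1)] by (simp add: last_conv_nth)
  ultimately show ?thesis by simp
qed

lemma ball_finite: assumes "x \<in> S" shows "finite (gball n0 S x r)"
proof -
  have "gball n0 S x r \<subseteq> {w. set w \<subseteq> {..<n0} \<and> length w \<le> length x + nat \<lceil>r\<rceil>}"
  proof
    fix y assume "y \<in> gball n0 S x r"
    then have y: "y \<in> S" "real (d x y) \<le> r" unfolding gball_def by auto
    have "set y \<subseteq> {..<n0}" using Ssub y unfolding tree_vert_def by auto
    moreover have "d x y \<le> nat \<lceil>r\<rceil>" using y by linarith
    ultimately show "y \<in> {w. set w \<subseteq> {..<n0} \<and> length w \<le> length x + nat \<lceil>r\<rceil>}"
      using len_dist[OF assms y(1)] by auto
  qed
  then show ?thesis by (rule finite_subset) (simp add: finite_lists_length_le)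
qed

lemma exit_nbr: assumes "x0 \<in> S" "r \<ge> 0"
  shows "\<exists>w\<in>S. w \<notin> gball n0 S x0 r \<and> real (d x0 w) \<le> r + 1"
proof -
  let ?B = "gball n0 S x0 r"
  obtain y where y: "y \<in> S" "y \<notin> ?B" using ball_finite[OF assms(1), of r] Sinf
    by (metis subsetI finite_subset)
  obtain p where p: "W p" "hd p = x0" "last p = y" using conn assms y unfolding graph_connected_def by blast
  have ne: "p \<noteq> []" using walk_ne p by blast
  define P where "P j \<longleftrightarrow> j < length p \<and> p!j \<notin> ?B" for j
  have ex: "P (length p - 1)" using p y ne unfolding P_def by (simp add: last_conv_nth)
  define j where "j = (LEAST j. P j)"
  have Pj: "P j" unfolding j_def using ex by (rule LeastI)
  have x0B: "x0 \<in> ?B" using assms dist_self unfolding gball_def by simp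
  have "j \<noteq> 0"
  proof
    assume "j = 0" then show False using Pj x0B p ne unfolding P_def by (simp add: hd_conv_nth)
  qed
  then obtain i where ji: "j = Suc i" by (cases j) auto
  have "\<not> P i" using not_less_Least[of i P] ji unfolding j_def by simp
  then have iB: "p!i \<in> ?B" using Pj ji unfolding P_def by simp
  have a: "ad (p!i) (p!j)" using walk_nth_adj p Pj ji unfolding P_def by simp
  have "d x0 (p!j) \<le> d x0 (p!i) + 1" using dist_adj[OF a assms(1)] .
  moreover have "real (d x0 (p!i)) \<le> r" using iB unfolding gball_def by simp
  moreover have "p!j \<in> S" using adj_S a by blast
  ultimately show ?thesis using Pj unfolding P_def by force
qed

end

context TG
begin
lemma Lap_expand: "Lap f x = real (dg x) * f x - (\<Sum>w\<in>N x. f w)"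
  unfolding Lap_def deg_def by (simp add: sum_subtractf)
end

locale TGB = TG +
  fixes B :: "nat list set" and F :: "nat list \<Rightarrow> real" and H :: real
  assumes Bfin: "finite B" and BS: "B \<subseteq> S" and Fnn: "\<forall>x\<in>S. F x \<ge> 0"
    and FLap: "\<forall>x\<in>B. Lap F x \<ge> real (dg x)" and FH: "\<forall>x\<in>B. F x \<le> H"
begin

definition u :: "nat \<Rightarrow> nat list \<Rightarrow> real" where
  "u k x = 1 - exitk n0 S B k x"

lemma u0: "u 0 x = (if x \<in> B then 1 else 0)"
  unfolding u_def by simp

lemma uSuc: "u (Suc k) x = (if x \<in> B then (\<Sum>w\<in>N x. u k w) / real (dg x) else 0)"
proof (cases "x \<in> B")
  case True
  then have xS: "x \<in> S" using BS by blast
  have dp: "real (dg x) > 0" using deg_pos[OF xS] by simp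
  have "u (Suc k) x = 1 - (\<Sum>w\<in>N x. 1 - u k w) / real (dg x)"
    using True unfolding u_def by simp
  also have "\<dots> = 1 - (real (dg x) - (\<Sum>w\<in>N x. u k w)) / real (dg x)"
    by (simp add: sum_subtractf deg_def)
  also have "\<dots> = (\<Sum>w\<in>N x. u k w) / real (dg x)"
    using dp by (simp add: field_simps)
  finally show ?thesis using True by simp
qed (simp add: u_def)

lemma u_out: "x \<notin> B \<Longrightarrow> u k x = 0"
  by (cases k) (simp_all add: u0 uSuc)

lemma u_bounds: "0 \<le> u k x \<and> u k x \<le> 1"
proof (induction k arbitrary: x)
  case 0 then show ?case by (simp add: u0)
next
  case (Suc k)
  show ?case
  proof (cases "x \<in> B")
    case True
    then have xS: "x \<in> S" using BS by blast
    have dp: "real (dg x) > 0" using deg_pos[OF xS] by simp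
    have "(\<Sum>w\<in>N x. u k w) \<le> (\<Sum>w\<in>N x. 1)" using Suc by (intro sum_mono) auto
    then have "(\<Sum>w\<in>N x. u k w) \<le> real (dg x)" by (simp add: deg_def)
    moreover have "0 \<le> (\<Sum>w\<in>N x. u k w)" using Suc by (intro sum_nonneg) auto
    ultimately show ?thesis using True dp by (simp add: uSuc)
  qed (simp add: uSuc)
qed

lemma u_nn: "0 \<le> u k x" using u_bounds by blast
lemma u_le1: "u k x \<le> 1" using u_bounds by blast

lemma partial_le: "x \<in> S \<Longrightarrow> (\<Sum>k<n. u k x) \<le> F x"
proof (induction n arbitrary: x)
  case 0 then show ?case using Fnn by simp
next
  case (Suc n)
  show ?case
  proof (cases "x \<in> B")
    case False
    then have "(\<Sum>k<Suc n. u k x) = 0" by (simp add: u_out)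
    then show ?thesis using Fnn Suc by simp
  next
    case True
    have dp: "real (dg x) > 0" using deg_pos Suc by simp
    have "(\<Sum>k<Suc n. u k x) = u 0 x + (\<Sum>k<n. u (Suc k) x)" by (rule sum.lessThan_Suc_shift)
    also have "\<dots> = 1 + (\<Sum>k<n. (\<Sum>w\<in>N x. u k w) / real (dg x))" using True by (simp add: u0 uSuc)
    also have "\<dots> = 1 + (\<Sum>w\<in>N x. (\<Sum>k<n. u k w)) / real (dg x)"
      by (simp add: sum_divide_distrib[symmetric]) (rule disjI2, rule sum.swap)
    also have "\<dots> \<le> 1 + (\<Sum>w\<in>N x. F w) / real (dg x)"
      using Suc.IH nbrs_S dp by (simp add: divide_right_mono sum_mono)
    also have "\<dots> \<le> F x"
      using FLap True dp unfolding Lap_expand by (simp add: field_simps)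
    finally show ?thesis .
  qed
qed

lemma u_summable: "summable (\<lambda>k. u k x)"
proof (cases "x \<in> B")
  case True
  then have "x \<in> S" using BS by blast
  then show ?thesis using partial_le u_nn by (intro summableI_nonneg_bounded) auto
qed (simp add: u_out)

definition h :: "nat list \<Rightarrow> real" where
  "h x = (\<Sum>k. u k x)"

lemma h_out: "x \<notin> B \<Longrightarrow> h x = 0"
  unfolding h_def by (simp add: u_out)

lemma h_nn: "0 \<le> h x"
  unfolding h_def using u_summable u_nn by (simp add: suminf_nonneg)

lemma h_le: "x \<in> S \<Longrightarrow> h x \<le> F x"
  unfolding h_def using u_summable partial_le by (rule suminf_le_const)

lemma h_leH: "x \<in> B \<Longrightarrow> h x \<le> H"
  using h_le FH BS by fastforce

lemma h_in: assumes "x \<in> B" shows "h x = 1 + (\<Sum>w\<in>N x. h w) / real (dg x)"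
proof -
  have "(\<Sum>k. u (Suc k) x) = h x - u 0 x" unfolding h_def using u_summable by (rule suminf_split_head)
  then have "h x = 1 + (\<Sum>k. u (Suc k) x)" using assms by (simp add: u0)
  also have "(\<Sum>k. u (Suc k) x) = (\<Sum>k. (\<Sum>w\<in>N x. u k w) / real (dg x))"
    using assms by (simp add: uSuc)
  also have "\<dots> = (\<Sum>k. (\<Sum>w\<in>N x. u k w)) / real (dg x)"
    by (rule suminf_divide) (intro summable_sum u_summable)
  also have "(\<Sum>k. (\<Sum>w\<in>N x. u k w)) = (\<Sum>w\<in>N x. h w)"
    unfolding h_def by (rule suminf_sum) (rule u_summable)
  finally show ?thesis .
qed

lemma tail: "(\<Sum>j. u (j + k) x) \<le> H * u k x"
proof (induction k arbitrary: x)
  case 0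
  show ?case
  proof (cases "x \<in> B")
    case True
    have "(\<Sum>j. u (j + 0) x) = h x" unfolding h_def by simp
    then show ?thesis using h_leH[OF True] True unfolding u0 by simp
  qed (simp add: u_out)
next
  case (Suc k)
  show ?case
  proof (cases "x \<in> B")
    case True
    have dp: "real (dg x) > 0" using deg_pos[of x] True BS by auto
    have sm: "summable (\<lambda>j. u (j + k) w)" for w by (subst summable_iff_shift) (rule u_summable)
    have "(\<Sum>j. u (j + Suc k) x) = (\<Sum>j. (\<Sum>w\<in>N x. u (j + k) w) / real (dg x))"
      using True by (simp add: uSuc)
    also have "\<dots> = (\<Sum>j. (\<Sum>w\<in>N x. u (j + k) w)) / real (dg x)"
      by (rule suminf_divide) (intro summable_sum sm)
    also have "(\<Sum>j. (\<Sum>w\<in>N x. u (j + k) w)) = (\<Sum>w\<in>N x. (\<Sum>j. u (j + k) w))"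
      by (rule suminf_sum) (rule sm)
    also have "(\<Sum>w\<in>N x. (\<Sum>j. u (j + k) w)) / real (dg x) \<le> (\<Sum>w\<in>N x. H * u k w) / real (dg x)"
      using Suc.IH dp by (simp add: divide_right_mono sum_mono)
    also have "\<dots> = H * u (Suc k) x" using True by (simp add: uSuc sum_distrib_left)
    finally show ?thesis .
  qed (simp add: u_out)
qed

lemma h_split: "h x \<le> real k + H * u k x"
proof -
  have "h x = (\<Sum>n. u (n + k) x) + (\<Sum>i<k. u i x)"
    unfolding h_def using u_summable by (rule suminf_split_initial_segment)
  moreover have "(\<Sum>i<k. u i x) \<le> (\<Sum>i<k. 1)" using u_le1 by (intro sum_mono) auto
  ultimately show ?thesis using tail[of k x] by simp
qed

lemma sub_le: assumes gout: "\<forall>x\<in>S - B. g x \<le> 0" and gLap: "\<forall>x\<in>B. Lap g x \<le> real (dg x)"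
  and xS: "x \<in> S"
  shows "g x \<le> h x"
proof -
  define C where "C = (\<Sum>y\<in>B. \<bar>g y\<bar>)"
  have C0: "C \<ge> 0" unfolding C_def by (simp add: sum_nonneg)
  have gC: "g y \<le> C" if "y \<in> B" for y
  proof -
    have "\<bar>g y\<bar> \<le> C" unfolding C_def using Bfin that by (intro member_le_sum) auto
    then show ?thesis by simp
  qed
  have main: "\<forall>y\<in>S. g y - h y \<le> C * u k y" for k
  proof (induction k)
    case 0
    show ?case
    proof
      fix y assume yS: "y \<in> S"
      show "g y - h y \<le> C * u 0 y"
      proof (cases "y \<in> B")
        case True then show ?thesis using gC[OF True] h_nn[of y] by (simp add: u0)
      next
        case False then show ?thesis using gout yS by (simp add: u0 h_out)
      qed
    qed
  next
    case (Suc k)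
    show ?case
    proof
      fix y assume yS: "y \<in> S"
      show "g y - h y \<le> C * u (Suc k) y"
      proof (cases "y \<in> B")
        case True
        have dp: "real (dg y) > 0" using deg_pos yS by simp
        have "g y \<le> 1 + (\<Sum>w\<in>N y. g w) / real (dg y)"
          using gLap True dp unfolding Lap_expand by (simp add: field_simps)
        then have "g y - h y \<le> (\<Sum>w\<in>N y. g w - h w) / real (dg y)"
          using h_in[OF True] by (simp add: sum_subtractf diff_divide_distrib)
        also have "\<dots> \<le> (\<Sum>w\<in>N y. C * u k w) / real (dg y)"
          using Suc.IH nbrs_S dp by (simp add: divide_right_mono sum_mono)
        also have "\<dots> = C * u (Suc k) y" using True by (simp add: uSuc sum_distrib_left)
        finally show ?thesis .
      next
        case False then show ?thesis using gout yS by (simp add: uSuc h_out)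
      qed
    qed
  qed
  have "(\<lambda>k. u k x) \<longlonglongrightarrow> 0" using u_summable by (rule summable_LIMSEQ_zero)
  then have "(\<lambda>k. C * u k x) \<longlonglongrightarrow> 0" by (auto intro: tendsto_mult_right_zero)
  then have "g x - h x \<le> 0" using main xS by (intro LIMSEQ_le_const[of _ 0]) auto
  then show ?thesis by simp
qed

end

definition pois :: "real \<Rightarrow> nat \<Rightarrow> real" where
  "pois t k = exp (- t) * t ^ k / fact k"

lemma pois_nn: "t \<ge> 0 \<Longrightarrow> pois t k \<ge> 0"
  unfolding pois_def by simp

lemma pois_sums: "pois t sums 1"
proof -
  have "(\<lambda>n. t^n / fact n) sums exp t" using exp_converges[of t] by (simp add: divide_inverse_commute)
  then have "(\<lambda>n. exp (- t) * (t^n / fact n)) sums (exp (- t) * exp t)" by (rule sums_mult)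
  then show ?thesis unfolding pois_def by (simp add: mult_exp_exp)
qed

lemma pois_summable: "summable (pois t)" using pois_sums by (rule sums_summable)

lemma pois_Suc: "pois t (Suc k) * real (Suc k) = t * pois t k"
proof -
  have "pois t (Suc k) * real (Suc k) = exp (- t) * (t * t ^ k) / (real (Suc k) * fact k) * real (Suc k)"
    unfolding pois_def by (simp only: fact_Suc power_Suc of_nat_mult)
  also have "\<dots> = exp (- t) * (t * t ^ k) / fact k"
    by (simp del: of_nat_Suc)
  finally show ?thesis unfolding pois_def by simp
qed

lemma pois_mean: "(\<lambda>k. pois t k * real k) sums t"
proof -
  have "(\<lambda>k. t * pois t k) sums (t * 1)" using pois_sums by (rule sums_mult)
  moreover have "t * pois t k = pois t (Suc k) * real (Suc k)" for k
    using pois_Suc by simp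
  ultimately have "(\<lambda>k. pois t (Suc k) * real (Suc k)) sums t" by simp
  then show ?thesis using sums_Suc_iff[of "\<lambda>k. pois t k * real k" t] by simp
qed

lemma pois_conv: "pois (2 * t) n = (\<Sum>i\<le>n. pois t i * pois t (n - i))"
proof -
  have "(t + t)^n /\<^sub>R fact n = (\<Sum>i\<le>n. (t^i /\<^sub>R fact i) * (t^(n-i) /\<^sub>R fact (n-i)))"
    by (rule exp_series_add_commuting) simp
  then have e: "(2*t)^n / fact n = (\<Sum>i\<le>n. (t^i / fact i) * (t^(n-i) / fact (n-i)))"
    unfolding mult_2 by (simp add: divide_inverse_commute)
  have "pois (2 * t) n = exp (-t) * exp (-t) * ((2*t)^n / fact n)"
    unfolding pois_def by (simp add: mult_exp_exp)
  also have "\<dots> = (\<Sum>i\<le>n. exp (-t) * exp (-t) * ((t^i / fact i) * (t^(n-i) / fact (n-i))))"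
    unfolding e by (rule sum_distrib_left)
  also have "\<dots> = (\<Sum>i\<le>n. pois t i * pois t (n - i))"
    unfolding pois_def by (intro sum.cong refl) (simp add: field_simps)
  finally show ?thesis .
qed
context TGB
begin

lemma pois_u_summable: assumes "t \<ge> 0" shows "summable (\<lambda>k. pois t k * u k x)"
proof (rule summable_comparison_test'[OF pois_summable[of t], of 0])
  fix n :: nat
  have "pois t n * u n x \<le> pois t n" using u_le1 pois_nn[OF assms] by (simp add: mult_left_le)
  moreover have "0 \<le> pois t n * u n x" using u_nn pois_nn[OF assms] by simp
  ultimately show "norm (pois t n * u n x) \<le> pois t n" by simp
qed

lemma exit_prob_eq: assumes "t \<ge> 0"
  shows "exit_prob n0 S B t x = 1 - (\<Sum>k. pois t k * u k x)"
proof -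
  have "exit_prob n0 S B t x = (\<Sum>k. pois t k - pois t k * u k x)"
    unfolding exit_prob_def by (rule arg_cong[where f=suminf], rule ext) (simp add: pois_def u_def field_simps)
  also have "\<dots> = (\<Sum>k. pois t k) - (\<Sum>k. pois t k * u k x)"
    by (rule suminf_diff[OF pois_summable pois_u_summable[OF assms], symmetric])
  also have "(\<Sum>k. pois t k) = 1" using pois_sums by (simp add: sums_iff)
  finally show ?thesis .
qed

lemma surv_lower: assumes "t \<ge> 0" "H > 0"
  shows "(\<Sum>k. pois t k * u k x) \<ge> (h x - t) / H"
proof -
  have s1: "(\<lambda>k. (pois t k * h x - pois t k * real k) / H) sums ((1 * h x - t) / H)"
    by (intro sums_divide sums_diff sums_mult2 pois_sums pois_mean)
  have s2: "(\<lambda>k. pois t k * u k x) sums (\<Sum>k. pois t k * u k x)"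
    using pois_u_summable[OF assms(1)] by (rule summable_sums)
  have le: "(pois t k * h x - pois t k * real k) / H \<le> pois t k * u k x" for k
  proof -
    have "(h x - real k) / H \<le> u k x" using h_split[of x k] assms by (simp add: field_simps)
    then have "pois t k * ((h x - real k) / H) \<le> pois t k * u k x"
      using pois_nn[OF assms(1)] by (rule mult_left_mono) 
    then show ?thesis by (simp add: algebra_simps diff_divide_distrib)
  qed
  show ?thesis using sums_le[OF le s1 s2] by simp
qed

end

lemma cs_weighted:
  fixes a d :: "'a \<Rightarrow> real"
  assumes fin: "finite I" and dpos: "\<forall>i\<in>I. d i > 0" and ne: "I \<noteq> {}"
  shows "(\<Sum>i\<in>I. a i)^2 / (\<Sum>i\<in>I. d i) \<le> (\<Sum>i\<in>I. (a i)^2 / d i)"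
proof -
  define D where "D = (\<Sum>i\<in>I. d i)"
  have D0: "D > 0" unfolding D_def using fin dpos ne by (simp add: sum_pos)
  define s where "s = (\<Sum>i\<in>I. a i) / D"
  have trm: "d i * (a i / d i - s)^2 = (a i)^2 / d i - 2 * s * a i + s^2 * d i" if "i \<in> I" for i
  proof -
    have "d i > 0" using dpos that by blast
    then show ?thesis by (simp add: power2_eq_square field_simps)
  qed
  have "0 \<le> (\<Sum>i\<in>I. d i * (a i / d i - s)^2)"
    using dpos by (intro sum_nonneg) auto
  also have "\<dots> = (\<Sum>i\<in>I. (a i)^2 / d i - 2 * s * a i + s^2 * d i)"
    using trm by (rule sum.cong[OF refl])
  also have "\<dots> = (\<Sum>i\<in>I. (a i)^2 / d i) - 2 * s * (\<Sum>i\<in>I. a i) + s^2 * D"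
    unfolding D_def by (simp add: sum.distrib sum_subtractf sum_distrib_left)
  also have "\<dots> = (\<Sum>i\<in>I. (a i)^2 / d i) - (\<Sum>i\<in>I. a i)^2 / D"
    unfolding s_def using D0 by (simp add: power2_eq_square field_simps)
  finally show ?thesis unfolding D_def by simp
qed

context TG
begin

abbreviation "p k x y \<equiv> pk n0 S k x y"

lemma pk_nn: "0 \<le> p k x y"
  by (induction k arbitrary: x) (auto intro!: sum_nonneg divide_nonneg_nonneg)

lemma pk_le1: "p k x y \<le> 1"
proof (induction k arbitrary: x)
  case 0 then show ?case by simp
next
  case (Suc k)
  have "(\<Sum>z\<in>N x. p k z y) \<le> (\<Sum>z\<in>N x. 1)" using Suc by (intro sum_mono) auto
  then have le: "(\<Sum>z\<in>N x. p k z y) \<le> real (dg x)" by (simp add: deg_def)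
  show ?case
  proof (cases "dg x = 0")
    case True then show ?thesis by simp
  next
    case False then show ?thesis using le by (simp add: divide_le_eq_1)
  qed
qed

lemma nbrs_sym: "w \<in> N y \<longleftrightarrow> y \<in> N w"
  unfolding nbrs_def using adj_sym by blast

lemma pk_last: "p (Suc k) x y = (\<Sum>w\<in>N y. p k x w / real (dg w))"
proof (induction k arbitrary: x)
  case 0
  have "p (Suc 0) x y = (if y \<in> N x then 1 else 0) / real (dg x)"
    using nbrs_finite by (simp add: sum.delta)
  also have "\<dots> = (\<Sum>w\<in>N y. (if x = w then 1 / real (dg x) else 0))"
    using nbrs_finite nbrs_sym[of x y] by (simp add: sum.delta)
  also have "\<dots> = (\<Sum>w\<in>N y. (if x = w then 1 else 0) / real (dg w))"
    by (rule sum.cong) auto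
  finally show ?case by simp
next
  case (Suc k)
  have "p (Suc (Suc k)) x y = (\<Sum>z\<in>N x. p (Suc k) z y) / real (dg x)" by simp
  also have "\<dots> = (\<Sum>z\<in>N x. \<Sum>w\<in>N y. p k z w / real (dg w)) / real (dg x)"
    using Suc.IH by simp
  also have "\<dots> = (\<Sum>w\<in>N y. \<Sum>z\<in>N x. p k z w / real (dg w)) / real (dg x)"
    by (subst sum.swap) (rule refl)
  also have "\<dots> = (\<Sum>w\<in>N y. ((\<Sum>z\<in>N x. p k z w) / real (dg w)) / real (dg x))"
    by (simp add: sum_divide_distrib)
  also have "\<dots> = (\<Sum>w\<in>N y. (\<Sum>z\<in>N x. p k z w) / real (dg x) / real (dg w))"
    by (rule sum.cong) (simp_all add: divide_divide_eq_left mult.commute)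
  also have "\<dots> = (\<Sum>w\<in>N y. p (Suc k) x w / real (dg w))" by simp
  finally show ?case .
qed

lemma pk_rev: "real (dg x) * p k x y = real (dg y) * p k y x"
proof (induction k arbitrary: x y)
  case 0 then show ?case by simp
next
  case (Suc k)
  show ?case
  proof (cases "dg x = 0")
    case True
    then have "N x = {}" using nbrs_finite unfolding deg_def by simp
    then have z: "p (Suc k) y x = 0" by (subst pk_last) simp
    have "real (dg x) * p (Suc k) x y = 0" using True by simp
    then show ?thesis using z by (simp only: mult_zero_right)
  next
    case False
    have "real (dg x) * p (Suc k) x y = (\<Sum>z\<in>N x. p k z y)" using False by simp
    also have "\<dots> = (\<Sum>z\<in>N x. real (dg y) * p k y z / real (dg z))"
    proof (rule sum.cong[OF refl])
      fix z assume "z \<in> N x"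
      then have "dg z > 0" using deg_pos nbrs_S by blast
      then show "p k z y = real (dg y) * p k y z / real (dg z)"
        using Suc.IH[of z y] by (simp add: field_simps)
    qed
    also have "\<dots> = real (dg y) * p (Suc k) y x"
      by (subst pk_last) (simp add: sum_distrib_left del: pk.simps)
    finally show ?thesis .
  qed
qed

lemma pk_CK: "finite F \<Longrightarrow> (\<Sum>y\<in>F. p i x y * p j y z) \<le> p (i + j) x z"
proof (induction i arbitrary: x)
  case 0
  have "(\<Sum>y\<in>F. p 0 x y * p j y z) = (\<Sum>y\<in>F. if x = y then p j x z else 0)"
    by (rule sum.cong) auto
  then show ?case using 0 pk_nn by (simp add: sum.delta)
next
  case (Suc i)
  have "(\<Sum>y\<in>F. p (Suc i) x y * p j y z) = (\<Sum>w\<in>N x. (\<Sum>y\<in>F. p i w y * p j y z)) / real (dg x)"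
    by (simp add: sum_divide_distrib[symmetric] sum_distrib_right) (rule disjI2, rule sum.swap)
  also have "\<dots> \<le> (\<Sum>w\<in>N x. p (i + j) w z) / real (dg x)"
    using Suc by (intro divide_right_mono sum_mono) auto
  also have "\<dots> = p (Suc i + j) x z" by simp
  finally show ?case .
qed

lemma ctrw_eq: "ctrw_prob n0 S t x y = (\<Sum>k. pois t k * p k x y)"
  unfolding ctrw_prob_def pois_def by simp

lemma ctrw_summable: assumes "t \<ge> 0" shows "summable (\<lambda>k. pois t k * p k x y)"
proof (rule summable_comparison_test'[OF pois_summable[of t], of 0])
  fix n :: nat
  have "pois t n * p n x y \<le> pois t n" using pk_le1 pois_nn[OF assms] by (simp add: mult_left_le)
  moreover have "0 \<le> pois t n * p n x y" using pk_nn pois_nn[OF assms] by simp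
  ultimately show "norm (pois t n * p n x y) \<le> pois t n" by simp
qed

lemma ctrw_rev: assumes "t \<ge> 0"
  shows "real (dg x) * ctrw_prob n0 S t x y = real (dg y) * ctrw_prob n0 S t y x"
proof -
  have "real (dg x) * ctrw_prob n0 S t x y = (\<Sum>k. real (dg x) * (pois t k * p k x y))"
    unfolding ctrw_eq by (rule suminf_mult[symmetric, OF ctrw_summable[OF assms]])
  also have "\<dots> = (\<Sum>k. real (dg y) * (pois t k * p k y x))"
    using pk_rev by (simp add: algebra_simps)
  also have "\<dots> = real (dg y) * ctrw_prob n0 S t y x"
    unfolding ctrw_eq by (rule suminf_mult[OF ctrw_summable[OF assms]])
  finally show ?thesis .
qed

lemma ctrw_CK: assumes "finite F" "t \<ge> 0"
  shows "(\<Sum>y\<in>F. ctrw_prob n0 S t x y * ctrw_prob n0 S t y x) \<le> ctrw_prob n0 S (2 * t) x x"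
proof -
  define a where "a y k = pois t k * p k x y" for y k
  define b where "b y k = pois t k * p k y x" for y k
  have an: "summable (\<lambda>k. norm (a y k))" for y
    unfolding a_def using ctrw_summable[OF assms(2)] pois_nn[OF assms(2)] pk_nn by simp
  have bn: "summable (\<lambda>k. norm (b y k))" for y
    unfolding b_def using ctrw_summable[OF assms(2)] pois_nn[OF assms(2)] pk_nn by simp
  have cp: "(\<lambda>n. \<Sum>i\<le>n. a y i * b y (n - i)) sums (ctrw_prob n0 S t x y * ctrw_prob n0 S t y x)" for y
    using Cauchy_product_sums[OF an bn] unfolding a_def b_def ctrw_eq by simp
  have s1: "(\<lambda>n. \<Sum>y\<in>F. \<Sum>i\<le>n. a y i * b y (n - i)) sums (\<Sum>y\<in>F. ctrw_prob n0 S t x y * ctrw_prob n0 S t y x)"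
    by (rule sums_sum) (rule cp)
  have s2: "(\<lambda>n. pois (2 * t) n * p n x x) sums ctrw_prob n0 S (2 * t) x x"
    unfolding ctrw_eq using ctrw_summable[of "2 * t"] assms by (simp add: summable_sums)
  have le: "(\<Sum>y\<in>F. \<Sum>i\<le>n. a y i * b y (n - i)) \<le> pois (2 * t) n * p n x x" for n
  proof -
    have "(\<Sum>y\<in>F. \<Sum>i\<le>n. a y i * b y (n - i)) = (\<Sum>i\<le>n. pois t i * pois t (n - i) * (\<Sum>y\<in>F. p i x y * p (n - i) y x))"
      unfolding a_def b_def by (subst sum.swap) (simp add: sum_distrib_left algebra_simps)
    also have "\<dots> \<le> (\<Sum>i\<le>n. pois t i * pois t (n - i) * p n x x)"
    proof (rule sum_mono)
      fix i assume "i \<in> {..n}"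
      then have "p n x x = p (i + (n - i)) x x" by simp
      then have "(\<Sum>y\<in>F. p i x y * p (n - i) y x) \<le> p n x x" using pk_CK[OF assms(1)] by simp
      then show "pois t i * pois t (n - i) * (\<Sum>y\<in>F. p i x y * p (n - i) y x) \<le> pois t i * pois t (n - i) * p n x x"
        using pois_nn[OF assms(2)] by (simp add: mult_left_mono)
    qed
    also have "\<dots> = pois (2 * t) n * p n x x" by (simp add: pois_conv sum_distrib_right)
    finally show ?thesis .
  qed
  show ?thesis using sums_le[OF le s1 s2] .
qed

end

context TGB
begin

lemma pk_B: "(\<Sum>y\<in>B. p k x y) \<ge> u k x"
proof (induction k arbitrary: x)
  case 0 then show ?case using Bfin by (simp add: u0 sum.delta)
next
  case (Suc k)
  show ?case
  proof (cases "x \<in> B")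
    case True
    have "u (Suc k) x = (\<Sum>w\<in>N x. u k w) / real (dg x)" using True by (simp add: uSuc)
    also have "\<dots> \<le> (\<Sum>w\<in>N x. \<Sum>y\<in>B. p k w y) / real (dg x)"
      using Suc by (intro divide_right_mono sum_mono) auto
    also have "\<dots> = (\<Sum>y\<in>B. p (Suc k) x y)"
      by (simp add: sum_divide_distrib[symmetric]) (rule disjI2, rule sum.swap)
    finally show ?thesis .
  next
    case False then show ?thesis using pk_nn by (simp add: u_out sum_nonneg)
  qed
qed

lemma ctrw_B: assumes "t \<ge> 0"
  shows "(\<Sum>k. pois t k * u k x) \<le> (\<Sum>y\<in>B. ctrw_prob n0 S t x y)"
proof -
  have "(\<Sum>y\<in>B. ctrw_prob n0 S t x y) = (\<Sum>k. \<Sum>y\<in>B. pois t k * p k x y)"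
    unfolding ctrw_eq by (rule suminf_sum[symmetric]) (rule ctrw_summable[OF assms])
  moreover have "summable (\<lambda>k. \<Sum>y\<in>B. pois t k * p k x y)"
    by (intro summable_sum ctrw_summable[OF assms])
  moreover have "pois t k * u k x \<le> (\<Sum>y\<in>B. pois t k * p k x y)" for k
    using pk_B[of k x] pois_nn[OF assms] by (simp add: sum_distrib_left[symmetric] mult_left_mono)
  ultimately show ?thesis using pois_u_summable[OF assms] by (simp add: suminf_le)
qed

end

lemma aux_div: fixes K t :: real assumes "K > 0" "t \<ge> 0"
  shows "t / (3 * K) \<le> t / (2 * K)" "t / (12 * K) \<le> t / (2 * K)"
  using assms by (auto simp: divide_simps)

context TG
begin

lemma main_lemma:
  assumes r1: "r \<ge> 1" and x0S: "x0 \<in> S" and exm: "\<exists>m. Mprop n0 S x0 r m"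
    and Mdef: "M = real (Mnum n0 S x0 r)" and Bdef: "B = gball n0 S x0 r"
    and Vdef: "V = vol n0 S x0 r" and V1def: "V1 = vol n0 S x0 (r / (32 * M))"
    and xB1: "x \<in> gball n0 S x0 (r / (32 * M))" and t0: "t > 0"
  shows "exit_prob n0 S B t x \<le> (1 - V1 / (64 * M * V)) + t / (2 * r * V) \<and>
         (t \<le> r * V1 / (64 * M) \<longrightarrow>
            heat_kernel n0 S (2 * t) x x \<ge> (1 / 16384) * V1 ^ 2 / (V ^ 3 * M ^ 2))"
proof -
  define Mn where "Mn = Mnum n0 S x0 r"
  have "Mprop n0 S x0 r Mn" unfolding Mn_def Mnum_def using exm by (rule LeastI_ex)
  then obtain A where A: "finite A" "card A = Mn" "A \<subseteq> S"
    "\<forall>z\<in>A. r / 4 \<le> real (d x0 z) \<and> real (d x0 z) \<le> 3 * r / 4"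
    and cut: "\<forall>p. W p \<and> hd p = x0 \<and> last p \<notin> gball n0 S x0 r \<longrightarrow> set p \<inter> A \<noteq> {}"
    unfolding Mprop_def by blast
  have Bfin: "finite B" unfolding Bdef using ball_finite[OF x0S] .
  have BS: "B \<subseteq> S" unfolding Bdef gball_def by auto
  have x0B: "x0 \<in> B" unfolding Bdef gball_def using x0S dist_self r1 by simp
  obtain w where w: "w \<in> S" "w \<notin> B" "real (d x0 w) \<le> r + 1"
    using exit_nbr[OF x0S, of r] r1 unfolding Bdef by auto
  have Mn1: "Mn \<ge> 1"
  proof (rule ccontr)
    assume "\<not> Mn \<ge> 1"
    then have "card A = 0" using A(2) by simp
    then have "A = {}" using A(1) by simp
    moreover obtain q where "W q" "hd q = x0" "last q = w"
      using conn x0S w unfolding graph_connected_def by blast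
    ultimately show False using cut w unfolding Bdef by blast
  qed
  have M1: "M \<ge> 1" unfolding Mdef using Mn1 Mn_def by simp
  have Mpos: "M > 0" using M1 by simp
  define B1 where "B1 = gball n0 S x0 (r / (32 * M))"
  have aux: "z \<le> r" if "0 \<le> z" "z \<le> r / (32 * M)" for z
  proof -
    have "z * 1 \<le> z * (32 * M)" using M1 that(1) by (intro mult_left_mono) auto
    then have "z \<le> z * (32 * M)" by simp
    moreover have "z * (32 * M) \<le> r" using that(2) Mpos by (simp add: field_simps)
    ultimately show ?thesis by linarith
  qed
  have B1B: "B1 \<subseteq> B" unfolding B1_def Bdef gball_def using aux by auto
  have xB: "x \<in> B" using xB1 B1B unfolding B1_def by blast
  have xS: "x \<in> S" using xB BS by blast
  have x0B1: "x0 \<in> B1" unfolding B1_def gball_def using x0S dist_self r1 Mpos by simp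
  have B1fin: "finite B1" using Bfin B1B finite_subset by blast
  have Vs: "V = (\<Sum>y\<in>B. real (dg y))" unfolding Vdef vol_def mu_def Bdef by simp
  have V1s: "V1 = (\<Sum>y\<in>B1. real (dg y))" unfolding V1def vol_def mu_def B1_def by simp
  have Vpos: "V > 0" unfolding Vs using Bfin x0B BS deg_pos
    by (intro sum_pos2[of _ x0]) auto
  have V1pos: "V1 > 0" unfolding V1s using B1fin x0B1 B1B BS deg_pos
    by (intro sum_pos2[of _ x0]) auto
  define F where "F y = (1/2) * (\<Sum>z\<in>B. real (dg z) * Gr w z y)" for y
  define H where "H = (2 * r + 1) * V"
  have Fnn: "\<forall>y\<in>S. F y \<ge> 0" unfolding F_def using Gr_nonneg w BS
    by (auto intro!: sum_nonneg mult_nonneg_nonneg)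
  have FLap: "\<forall>y\<in>B. Lap F y \<ge> real (dg y)"
  proof
    fix y assume yB: "y \<in> B"
    have yS: "y \<in> S" using yB BS by blast
    have "Lap F y = (1/2) * (\<Sum>z\<in>B. real (dg z) * Lap (Gr w z) y)"
      unfolding F_def Lap_cmult Lap_sum by (simp add: Lap_cmult)
    also have "\<dots> = (1/2) * (\<Sum>z\<in>B. real (dg z) * (if y = z then 2 else 0))"
    proof -
      have "Lap (Gr w z) y = (if y = z then 2 else 0)" if "z \<in> B" for z
      proof -
        have "z \<in> S" using that BS by blast
        moreover have "y \<noteq> w" using yB w(2) by blast
        ultimately show ?thesis using LapGr[OF w(1) _ yS, of z] by simp
      qed
      then show ?thesis by simp
    qed
    also have "\<dots> = real (dg y)"
      using Bfin yB by (simp add: if_distrib sum.delta cong: if_cong)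
    finally show "Lap F y \<ge> real (dg y)" by simp
  qed
  have FH: "\<forall>y\<in>B. F y \<le> H"
  proof
    fix y assume yB: "y \<in> B"
    have yS: "y \<in> S" using yB BS by blast
    have "F y \<le> (1/2) * (\<Sum>z\<in>B. real (dg z) * (2 * (2 * r + 1)))"
      unfolding F_def
    proof (rule mult_left_mono[OF sum_mono])
      fix z assume zB: "z \<in> B"
      have zS: "z \<in> S" using zB BS by blast
      have g1: "Gr w z y \<le> 2 * real (d w z)" using Gr_le w(1) zS yS by blast
      have g2: "real (d w z) \<le> real (d w x0) + real (d x0 z)"
        using dist_tri[OF w(1) x0S zS] by simp
      have g3: "real (d w x0) = real (d x0 w)" using dist_sym w(1) x0S by simp
      have g4: "real (d x0 z) \<le> r" using zB unfolding Bdef gball_def by simp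
      have "Gr w z y \<le> 2 * (2 * r + 1)" using g1 g2 g3 g4 w(3) by argo
      then show "real (dg z) * Gr w z y \<le> real (dg z) * (2 * (2 * r + 1))"
        by (intro mult_left_mono) auto
    qed auto
    also have "\<dots> = H" unfolding H_def Vs by (simp add: sum_distrib_right[symmetric])
    finally show "F y \<le> H" .
  qed
  interpret TB: TGB n0 S B F H
    using Bfin BS Fnn FLap FH by unfold_locales auto
  have LGs: "Lap (\<lambda>v. \<Sum>z\<in>Z. c z * Gr x0 z v) y =
      (if y \<in> Z then 2 * c y else 0) - (if y = x0 then 2 * (\<Sum>z\<in>Z. c z) else 0)"
    if ZS: "Z \<subseteq> S" and Zf: "finite Z" and yS: "y \<in> S" for Z c y
  proof -
    have "Lap (\<lambda>v. \<Sum>z\<in>Z. c z * Gr x0 z v) y = (\<Sum>z\<in>Z. c z * Lap (Gr x0 z) y)"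
      by (simp add: Lap_sum Lap_cmult)
    also have "\<dots> = (\<Sum>z\<in>Z. c z * (if y = z then 2 else 0) - c z * (if y = x0 then 2 else 0))"
    proof (rule sum.cong[OF refl])
      fix z assume "z \<in> Z"
      then have "z \<in> S" using ZS by blast
      then show "c z * Lap (Gr x0 z) y = c z * (if y = z then 2 else 0) - c z * (if y = x0 then 2 else 0)"
        using LapGr[OF x0S _ yS, of z] by (simp only: right_diff_distrib)
    qed
    also have "\<dots> = (\<Sum>z\<in>Z. c z * (if y = z then 2 else 0)) - (\<Sum>z\<in>Z. c z * (if y = x0 then 2 else 0))"
      by (rule sum_subtractf)
    also have "(\<Sum>z\<in>Z. c z * (if y = z then 2 else 0)) = (if y \<in> Z then 2 * c y else 0)"
    proof -
      have "(\<Sum>z\<in>Z. c z * (if y = z then 2 else 0)) = (\<Sum>z\<in>Z. if y = z then 2 * c y else 0)"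
        by (rule sum.cong) auto
      then show ?thesis using Zf by (simp add: sum.delta)
    qed
    also have "(\<Sum>z\<in>Z. c z * (if y = x0 then 2 else 0)) = (if y = x0 then 2 * (\<Sum>z\<in>Z. c z) else 0)"
      by (simp add: sum_distrib_right[symmetric])
    finally show ?thesis .
  qed
  define c0 where "c0 = 7 * r / (32 * M)"
  define g where "g y = V1 * c0 + (1/2) * (\<Sum>z\<in>B1. real (dg z) * Gr x0 z y)
      - (V1 / (2 * M)) * (\<Sum>a\<in>A. 1 * Gr x0 a y)" for y
  have B1S: "B1 \<subseteq> S" using B1B BS by blast
  have gLap: "\<forall>y\<in>B. Lap g y \<le> real (dg y)"
  proof
    fix y assume yB: "y \<in> B"
    have yS: "y \<in> S" using yB BS by blast
    have "Lap g y = (1/2) * Lap (\<lambda>v. \<Sum>z\<in>B1. real (dg z) * Gr x0 z v) y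
        - (V1 / (2 * M)) * Lap (\<lambda>v. \<Sum>a\<in>A. 1 * Gr x0 a v) y"
      unfolding g_def by (simp only: Lap_diff Lap_add Lap_const Lap_cmult)
    also have "\<dots> = (if y \<in> B1 then real (dg y) else 0) - (if y = x0 then V1 else 0)
        - (V1 / (2 * M)) * ((if y \<in> A then 2 else 0) - (if y = x0 then 2 * M else 0))"
      using LGs[OF B1S B1fin yS, of "\<lambda>z. real (dg z)"] LGs[OF A(3) A(1) yS, of "\<lambda>z. 1"] A(2)
      unfolding V1s Mdef Mn_def[symmetric] by simp
    also have "\<dots> = (if y \<in> B1 then real (dg y) else 0) - (if y \<in> A then V1 / M else 0)"
      using Mpos by (auto simp: field_simps)
    also have "\<dots> \<le> real (dg y)"
    proof -
      have "0 \<le> V1 / M" using V1pos Mpos by simp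
      then show ?thesis by auto
    qed
    finally show "Lap g y \<le> real (dg y)" .
  qed
  have B1d: "real (d x0 z) \<le> r / (32 * M)" if "z \<in> B1" for z
    using that unfolding B1_def gball_def by simp
  have sumB1_le: "(\<Sum>z\<in>B1. real (dg z) * Gr x0 z y) \<le> V1 * (2 * (r / (32 * M)))" if yS: "y \<in> S" for y
  proof -
    have "(\<Sum>z\<in>B1. real (dg z) * Gr x0 z y) \<le> (\<Sum>z\<in>B1. real (dg z) * (2 * (r / (32 * M))))"
    proof (rule sum_mono)
      fix z assume zB1: "z \<in> B1"
      have "Gr x0 z y \<le> 2 * real (d x0 z)" using Gr_le x0S B1S zB1 yS by blast
      also have "\<dots> \<le> 2 * (r / (32 * M))" using B1d[OF zB1] by simp
      finally show "real (dg z) * Gr x0 z y \<le> real (dg z) * (2 * (r / (32 * M)))"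
        by (intro mult_left_mono) auto
    qed
    also have "\<dots> = V1 * (2 * (r / (32 * M)))" unfolding V1s by (rule sum_distrib_right[symmetric])
    finally show ?thesis .
  qed
  have gout: "\<forall>y\<in>S - B. g y \<le> 0"
  proof
    fix y assume yo: "y \<in> S - B"
    have yS: "y \<in> S" using yo by blast
    obtain q where q: "W q" "hd q = x0" "last q = y" "length q = Suc (d x0 y)"
      using dist_ex[OF x0S yS] by blast
    have "set q \<inter> A \<noteq> {}" using cut q yo unfolding Bdef by blast
    then obtain a where aA: "a \<in> A" and aq: "a \<in> set q" by blast
    then obtain i where i: "i < length q" "q!i = a" by (auto simp: in_set_conv_nth)
    have di1: "d x0 a \<le> i" using dist_index(1)[OF q(1-3) i(1)] i by simp
    have di2: "d a y \<le> length q - 1 - i" using dist_index(2)[OF q(1-3) i(1)] i by simp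
    have aS: "a \<in> S" using aA A(3) by blast
    have "Gr x0 a y \<ge> 2 * real (d x0 a)" unfolding Gr_def using di1 di2 q(4) i(1) by simp
    moreover have "real (d x0 a) \<ge> r / 4" using A(4) aA by blast
    ultimately have Ga: "Gr x0 a y \<ge> r / 2" by simp
    have "(\<Sum>a'\<in>A. 1 * Gr x0 a' y) \<ge> 1 * Gr x0 a y"
      using A(1) aA Gr_nonneg[OF x0S _ yS] A(3) by (intro member_le_sum) auto
    then have SA: "(\<Sum>a'\<in>A. 1 * Gr x0 a' y) \<ge> r / 2" using Ga by simp
    have c1: "(1/2) * (\<Sum>z\<in>B1. real (dg z) * Gr x0 z y) \<le> V1 * (r / (32 * M))"
      using sumB1_le[OF yS] by simp
    have c2: "(V1 / (2 * M)) * (r / 2) \<le> (V1 / (2 * M)) * (\<Sum>a\<in>A. 1 * Gr x0 a y)"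
      using SA V1pos Mpos by (intro mult_left_mono) auto
    have "g y \<le> V1 * c0 + V1 * (r / (32 * M)) - (V1 / (2 * M)) * (r / 2)"
      unfolding g_def using c1 c2 by linarith
    also have "\<dots> = 0" unfolding c0_def using Mpos by (simp add: field_simps)
    finally show "g y \<le> 0" .
  qed
  have gx: "g x \<ge> 3 * r * V1 / (16 * M)"
  proof -
    have "(\<Sum>z\<in>B1. real (dg z) * Gr x0 z x) \<ge> 0"
      using Gr_nonneg[OF x0S _ xS] B1S by (intro sum_nonneg mult_nonneg_nonneg) auto
    moreover have "(\<Sum>a\<in>A. 1 * Gr x0 a x) \<le> (\<Sum>a\<in>A. 2 * (r / (32 * M)))"
    proof (rule sum_mono)
      fix a assume "a \<in> A"
      then have "a \<in> S" using A(3) by blast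
      then have "Gr x0 a x \<le> 2 * real (d x0 x)" using Gr_le' x0S xS by blast
      also have "\<dots> \<le> 2 * (r / (32 * M))" using B1d[of x] xB1 unfolding B1_def by linarith
      finally show "1 * Gr x0 a x \<le> 2 * (r / (32 * M))" by simp
    qed
    moreover have "(\<Sum>a\<in>A. 2 * (r / (32 * M))) = M * (2 * (r / (32 * M)))"
      using A(2) unfolding Mdef Mn_def by simp
    ultimately have sA: "(\<Sum>a\<in>A. 1 * Gr x0 a x) \<le> M * (2 * (r / (32 * M)))"
      and c1: "(1/2) * (\<Sum>z\<in>B1. real (dg z) * Gr x0 z x) \<ge> 0" by auto
    have "0 \<le> V1 / (2 * M)" using V1pos Mpos by simp
    then have c2: "(V1 / (2 * M)) * (\<Sum>a\<in>A. 1 * Gr x0 a x) \<le> (V1 / (2 * M)) * (M * (2 * (r / (32 * M))))"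
      using sA by (rule mult_left_mono[rotated])
    have "3 * r * V1 / (16 * M) = V1 * c0 - (V1 / (2 * M)) * (M * (2 * (r / (32 * M))))"
      unfolding c0_def using Mpos by (simp add: field_simps)
    also have "\<dots> \<le> g x" unfolding g_def using c1 c2 by linarith
    finally show ?thesis .
  qed
  have hx: "TB.h x \<ge> 3 * r * V1 / (16 * M)"
    using TB.sub_le[OF gout gLap xS] gx by linarith
  have t0': "t \<ge> 0" using t0 by simp
  have Hpos: "H > 0" unfolding H_def using r1 Vpos by simp
  define surv where "surv = (\<Sum>k. pois t k * TB.u k x)"
  have survH: "surv \<ge> (TB.h x - t) / H" unfolding surv_def using TB.surv_lower[OF t0' Hpos] .
  have surv0: "surv \<ge> 0" unfolding surv_def
    using TB.pois_u_summable[OF t0'] pois_nn[OF t0'] TB.u_nn by (intro suminf_nonneg) auto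
  have rV: "r * V > 0" using r1 Vpos by simp
  have H3: "H \<le> 3 * (r * V)" unfolding H_def using r1 Vpos by (simp add: algebra_simps)
  have key: "surv \<ge> V1 / (64 * M * V) - t / (2 * r * V)"
  proof (cases "TB.h x \<ge> t")
    case True
    have s1: "(TB.h x - t) / H \<ge> (TB.h x - t) / (3 * (r * V))"
      using True H3 Hpos rV by (intro divide_left_mono) auto
    have s2: "(TB.h x - t) / (3 * (r * V)) \<ge> (3 * r * V1 / (16 * M) - t) / (3 * (r * V))"
      using hx rV by (intro divide_right_mono) auto
    have e2: "(3 * r * V1 / (16 * M) - t) / (3 * (r * V)) = V1 / (16 * M * V) - t / (3 * (r * V))"
      using rV Mpos Vpos r1 by (simp add: field_simps)
    have s3: "V1 / (64 * M * V) \<le> V1 / (16 * M * V)"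
      using V1pos Mpos Vpos by (intro divide_left_mono) auto
    have "t / (3 * (r * V)) \<le> t / (2 * (r * V))"
      using aux_div[OF rV t0'] by simp
    then have s4: "t / (3 * (r * V)) \<le> t / (2 * r * V)" by (simp add: mult.assoc)
    show ?thesis using survH s1 s2 e2 s3 s4 by argo
  next
    case False
    then have lt: "3 * r * V1 / (16 * M) < t" using hx by linarith
    have e1: "V1 / (64 * M * V) = (3 * r * V1 / (16 * M)) / (12 * (r * V))"
      using rV Mpos Vpos r1 by (simp add: field_simps)
    have "(3 * r * V1 / (16 * M)) / (12 * (r * V)) < t / (12 * (r * V))"
      using lt rV by (intro divide_strict_right_mono) auto
    moreover have "t / (12 * (r * V)) \<le> t / (2 * (r * V))"
      using aux_div[OF rV t0'] by simp
    then have "t / (12 * (r * V)) \<le> t / (2 * r * V)" by (simp add: mult.assoc)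
    ultimately show ?thesis using e1 surv0 by linarith
  qed
  have part1: "exit_prob n0 S B t x \<le> (1 - V1 / (64 * M * V)) + t / (2 * r * V)"
    using TB.exit_prob_eq[OF t0', of x] key unfolding surv_def by linarith
  have part2: "heat_kernel n0 S (2 * t) x x \<ge> (1 / 16384) * V1 ^ 2 / (V ^ 3 * M ^ 2)"
    if tle: "t \<le> r * V1 / (64 * M)"
  proof -
    have "0 \<le> 2 * r * V" using r1 Vpos by simp
    then have "t / (2 * r * V) \<le> (r * V1 / (64 * M)) / (2 * r * V)"
      by (rule divide_right_mono[OF tle])
    also have "\<dots> = V1 / (128 * M * V)" using rV Mpos Vpos r1 by (simp add: field_simps)
    finally have "t / (2 * r * V) \<le> V1 / (128 * M * V)" .
    moreover have "V1 / (64 * M * V) = 2 * (V1 / (128 * M * V))" by simp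
    ultimately have sv: "surv \<ge> V1 / (128 * M * V)" using key by linarith
    have sv0: "V1 / (128 * M * V) \<ge> 0" using V1pos Mpos Vpos by simp
    define P where "P y = ctrw_prob n0 S t x y" for y
    have PB: "(\<Sum>y\<in>B. P y) \<ge> surv" unfolding surv_def P_def using TB.ctrw_B[OF t0'] .
    have dxpos: "real (dg x) > 0" using deg_pos xS by simp
    have rev: "ctrw_prob n0 S t y x = real (dg x) * P y / real (dg y)" if "y \<in> B" for y
    proof -
      have "real (dg y) > 0" using deg_pos that BS by auto
      then show ?thesis using ctrw_rev[OF t0', of x y] unfolding P_def by (simp add: field_simps)
    qed
    have "(\<Sum>y\<in>B. P y * ctrw_prob n0 S t y x) \<le> ctrw_prob n0 S (2 * t) x x"
      unfolding P_def using ctrw_CK[OF Bfin t0'] .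
    moreover have "(\<Sum>y\<in>B. P y * ctrw_prob n0 S t y x) = real (dg x) * (\<Sum>y\<in>B. (P y)^2 / real (dg y))"
      unfolding sum_distrib_left using rev by (intro sum.cong) (auto simp: power2_eq_square)
    ultimately have hk: "heat_kernel n0 S (2 * t) x x \<ge> (\<Sum>y\<in>B. (P y)^2 / real (dg y))"
      unfolding heat_kernel_def using dxpos by (simp add: field_simps)
    have cs: "(\<Sum>y\<in>B. P y)^2 / V \<le> (\<Sum>y\<in>B. (P y)^2 / real (dg y))"
      unfolding Vs using cs_weighted[OF Bfin, of "\<lambda>y. real (dg y)" P] deg_pos BS x0B by auto
    have "(V1 / (128 * M * V))^2 \<le> (\<Sum>y\<in>B. P y)^2"
      using sv PB sv0 by (intro power_mono) auto
    then have "(V1 / (128 * M * V))^2 / V \<le> (\<Sum>y\<in>B. P y)^2 / V"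
      using Vpos by (intro divide_right_mono) auto
    moreover have "(V1 / (128 * M * V))^2 / V = (1 / 16384) * V1 ^ 2 / (V ^ 3 * M ^ 2)"
      using Vpos Mpos by (simp add: field_simps power2_eq_square power3_eq_cube)
    ultimately show ?thesis using cs hk by linarith
  qed
  show ?thesis using part1 part2 by blast
qed

end

theorem proposition4p6:
  fixes n0 :: nat and S :: "nat list set"
  assumes "n0 \<ge> 2" and "S \<subseteq> tree_vert n0" and "infinite S" and "graph_connected n0 S"
  shows "\<exists>c1>0. \<forall>(r::real) x0 x (t::real).
     r \<ge> 1 \<longrightarrow> x0 \<in> S \<longrightarrow> (\<exists>m. Mprop n0 S x0 r m) \<longrightarrow>
     (let M = real (Mnum n0 S x0 r); B = gball n0 S x0 r; V = vol n0 S x0 r;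
          V1 = vol n0 S x0 (r / (32 * M))
      in x \<in> gball n0 S x0 (r / (32 * M)) \<longrightarrow> t > 0 \<longrightarrow>
         exit_prob n0 S B t x \<le> (1 - V1 / (64 * M * V)) + t / (2 * r * V) \<and>
         (t \<le> r * V1 / (64 * M) \<longrightarrow>
            heat_kernel n0 S (2 * t) x x \<ge> c1 * V1 ^ 2 / (V ^ 3 * M ^ 2)))"
  proof -
  interpret TG n0 S using assms by unfold_locales
  show ?thesis
  proof (intro exI[of _ "1/16384::real"] conjI allI impI)
    show "(0::real) < 1/16384" by simp
    fix r :: real and x0 x and t :: real
    assume r1: "r \<ge> 1" and x0S: "x0 \<in> S" and exm: "\<exists>m. Mprop n0 S x0 r m"
    show "let M = real (Mnum n0 S x0 r); B = gball n0 S x0 r; V = vol n0 S x0 r;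
          V1 = vol n0 S x0 (r / (32 * M))
      in x \<in> gball n0 S x0 (r / (32 * M)) \<longrightarrow> t > 0 \<longrightarrow>
         exit_prob n0 S B t x \<le> (1 - V1 / (64 * M * V)) + t / (2 * r * V) \<and>
         (t \<le> r * V1 / (64 * M) \<longrightarrow>
            heat_kernel n0 S (2 * t) x x \<ge> 1/16384 * V1 ^ 2 / (V ^ 3 * M ^ 2))"
      unfolding Let_def
      using main_lemma[OF r1 x0S exm refl refl refl refl] by simp
  qed
qed

end
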